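(* Let $U$ be an infinite complex matrix (rows and columns indexed by positive integers) with finitely many nonzero entries in every row and every column, and suppose $U^*U=I$. Then the rows of $U$ are pairwise orthogonal if and only if every row of $U$ has norm $0$ or $1$.
   Context: $U^*$ denotes the Hermitian conjugate of $U$; $I$ is the infinite identity matrix; for rows $r_i,r_k$, $\langle r_k|r_i\rangle=\sum_j u_{kj}^*u_{ij}$ and $\|r_i\|^2=\langle r_i|r_i\rangle$. *)

theory Defs
  imports "HOL-Analysis.Analysis"
begin

text \<open>Infinite complex matrices, rows and columns indexed by natural numbers
  (index 0 plays the role of the first row/column).\<close>

type_synonym infmat = "nat \<Rightarrow> nat \<Rightarrow> complex"

definition row_finite :: "infmat \<Rightarrow> bool" where
  "row_finite U \<longleftrightarrow> (\<forall>i. finite {j. U i j \<noteq> 0})"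

definition col_finite :: "infmat \<Rightarrow> bool" where
  "col_finite U \<longleftrightarrow> (\<forall>j. finite {i. U i j \<noteq> 0})"

definition hconj :: "infmat \<Rightarrow> infmat" where
  "hconj U = (\<lambda>i j. cnj (U j i))"

definition mmult :: "infmat \<Rightarrow> infmat \<Rightarrow> infmat" where
  "mmult A B = (\<lambda>i k. \<Sum>\<^sub>\<infinity>j. A i j * B j k)"

definition ident :: infmat where
  "ident = (\<lambda>i j. if i = j then 1 else 0)"

definition row_inner :: "infmat \<Rightarrow> nat \<Rightarrow> nat \<Rightarrow> complex" where
  "row_inner U k i = (\<Sum>\<^sub>\<infinity>j. cnj (U k j) * U i j)"

definition row_norm :: "infmat \<Rightarrow> nat \<Rightarrow> real" where
  "row_norm U i = sqrt (Re (row_inner U i i))"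

end

theory Submission
  imports Defs
begin

lemma inf_to_fin:
  assumes "finite S" "\<And>x. x \<notin> S \<Longrightarrow> f x = 0"
  shows "infsum f UNIV = sum f S"
proof -
  have "infsum f UNIV = infsum f S"
    by (rule infsum_cong_neutral) (use assms in auto)
  also have "\<dots> = sum f S" using assms(1) by (rule infsum_finite)
  finally show ?thesis .
qed

lemma col_orth:
  assumes cf: "col_finite U" and id: "mmult (hconj U) U = ident"
    and K: "finite K" "{m. U m j \<noteq> 0} \<subseteq> K"
  shows "(\<Sum>m\<in>K. cnj (U m j) * U m l) = (if j = l then 1 else 0)"
proof -
  have "ident j l = (\<Sum>\<^sub>\<infinity>m. cnj (U m j) * U m l)"
    using id[symmetric] by (simp add: mmult_def hconj_def fun_eq_iff)
  also have "\<dots> = (\<Sum>m\<in>K. cnj (U m j) * U m l)"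
    by (rule inf_to_fin) (use K in auto)
  finally show ?thesis by (simp add: ident_def)
qed

lemma ri1:
  assumes "row_finite U"
  shows "row_inner U k i = (\<Sum>j\<in>{j. U i j \<noteq> 0}. cnj (U k j) * U i j)"
  unfolding row_inner_def
  by (rule inf_to_fin) (use assms in \<open>auto simp: row_finite_def\<close>)

lemma ri2:
  assumes "row_finite U"
  shows "row_inner U i k = (\<Sum>j\<in>{j. U i j \<noteq> 0}. cnj (U i j) * U k j)"
  unfolding row_inner_def
  by (rule inf_to_fin) (use assms in \<open>auto simp: row_finite_def\<close>)

lemma ri_cnj:
  assumes "row_finite U"
  shows "row_inner U i k = cnj (row_inner U k i)"
  by (simp only: ri1[OF assms, of k i] ri2[OF assms, of i k] cnj_sum) (simp add: mult.commute)

lemma key: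
  fixes i :: nat
  assumes rf: "row_finite U" and cf: "col_finite U" and id: "mmult (hconj U) U = ident"
  defines "S \<equiv> {j. U i j \<noteq> 0}"
  defines "K \<equiv> insert i (\<Union>j\<in>S. {m. U m j \<noteq> 0})"
  shows "finite K" "\<And>m. m \<notin> K \<Longrightarrow> row_inner U m i = 0"
    "(\<Sum>k\<in>K. row_inner U k i * row_inner U i k) = row_inner U i i"
proof -
  have S: "finite S" using rf by (simp add: S_def row_finite_def)
  show fK: "finite K" unfolding K_def using S cf by (auto simp: col_finite_def)
  show "\<And>m. m \<notin> K \<Longrightarrow> row_inner U m i = 0"
    using rf by (auto simp: ri1 K_def S_def intro!: sum.neutral)
  have CK: "{m. U m j \<noteq> 0} \<subseteq> K" if "j \<in> S" for j using that by (auto simp: K_def)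
  have "(\<Sum>k\<in>K. row_inner U k i * row_inner U i k)
      = (\<Sum>k\<in>K. \<Sum>j\<in>S. \<Sum>l\<in>S. (U i j * cnj (U i l)) * (cnj (U k j) * U k l))"
    unfolding ri1[OF rf, of _ i] ri2[OF rf, of i] S_def[symmetric]
    by (intro sum.cong refl, subst sum_product, intro sum.cong refl, simp add: mult_ac)
  also have "\<dots> = (\<Sum>j\<in>S. \<Sum>l\<in>S. \<Sum>k\<in>K. (U i j * cnj (U i l)) * (cnj (U k j) * U k l))"
    by (simp add: sum.swap[of _ K] sum.swap[of _ K S])
  also have "\<dots> = (\<Sum>j\<in>S. \<Sum>l\<in>S. (U i j * cnj (U i l)) * (if j = l then 1 else 0))"
    by (intro sum.cong refl) (simp add: sum_distrib_left[symmetric] col_orth[OF cf id fK CK])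
  also have "\<dots> = (\<Sum>j\<in>S. U i j * cnj (U i j))"
    using S by (simp add: if_distrib sum.delta cong: if_cong)
  also have "\<dots> = row_inner U i i" using rf by (simp add: ri1 S_def mult.commute)
  finally show "(\<Sum>k\<in>K. row_inner U k i * row_inner U i k) = row_inner U i i" .
qed

lemma key2:
  assumes rf: "row_finite U" and cf: "col_finite U" and id: "mmult (hconj U) U = ident"
  obtains K where "finite K" "i \<in> K" "\<And>m. m \<notin> K \<Longrightarrow> row_inner U m i = 0"
    "row_inner U i i = of_real (\<Sum>k\<in>K. (cmod (row_inner U k i))\<^sup>2)"
proof -
  let ?K = "insert i (\<Union>j\<in>{j. U i j \<noteq> 0}. {m. U m j \<noteq> 0})"
  have "row_inner U i i = (\<Sum>k\<in>?K. row_inner U k i * row_inner U i k)"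
    using key(3)[OF rf cf id, of i] by simp
  also have "\<dots> = (\<Sum>k\<in>?K. of_real ((cmod (row_inner U k i))\<^sup>2))"
    by (intro sum.cong refl) (metis ri_cnj[OF rf] complex_norm_square of_real_power)
  finally have eq: "row_inner U i i = of_real (\<Sum>k\<in>?K. (cmod (row_inner U k i))\<^sup>2)"
    by simp
  show ?thesis
  proof (rule that)
    show "finite ?K" by (rule key(1)[OF rf cf id])
    show "i \<in> ?K" by simp
    show "\<And>k. k \<notin> ?K \<Longrightarrow> row_inner U k i = 0" by (rule key(2)[OF rf cf id])
  qed (rule eq)
qed

lemma a01:
  fixes a :: real
  assumes "a = a\<^sup>2" shows "a = 0 \<or> a = 1"
proof -
  have "a * (a - 1) = 0" using assms by (simp add: power2_eq_square algebra_simps)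
  thus ?thesis by simp
qed

theorem lemma3:
  fixes U :: infmat
  assumes "row_finite U" and "col_finite U"
    and "mmult (hconj U) U = ident"
  shows "(\<forall>i k. i \<noteq> k \<longrightarrow> row_inner U k i = 0) \<longleftrightarrow>
         (\<forall>i. row_norm U i = 0 \<or> row_norm U i = 1)"
proof
  assume orth: "\<forall>i k. i \<noteq> k \<longrightarrow> row_inner U k i = 0"
  show "\<forall>i. row_norm U i = 0 \<or> row_norm U i = 1"
  proof
    fix i
    obtain K :: "nat set" where K: "finite K" "i \<in> K" "\<And>m. m \<notin> K \<Longrightarrow> row_inner U m i = 0"
      "row_inner U i i = of_real (\<Sum>k\<in>K. (cmod (row_inner U k i))\<^sup>2)"
      using key2[OF assms] by blast
    define a where "a = Re (row_inner U i i)"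
    have ra: "row_inner U i i = of_real a" using K(4) by (simp add: a_def)
    have aS: "a = (\<Sum>k\<in>K. (cmod (row_inner U k i))\<^sup>2)" using K(4) by (simp add: a_def)
    have "(\<Sum>k\<in>K. (cmod (row_inner U k i))\<^sup>2) = (cmod (row_inner U i i))\<^sup>2
        + (\<Sum>k\<in>K-{i}. (cmod (row_inner U k i))\<^sup>2)"
      by (rule sum.remove[OF K(1,2)])
    also have "(\<Sum>k\<in>K-{i}. (cmod (row_inner U k i))\<^sup>2) = 0"
      using orth by (intro sum.neutral) auto
    also have "(cmod (row_inner U i i))\<^sup>2 = a\<^sup>2" unfolding ra norm_of_real by simp
    finally have X: "(\<Sum>k\<in>K. (cmod (row_inner U k i))\<^sup>2) = a\<^sup>2 + 0" .
    have "a = a\<^sup>2" using X aS by linarith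
    hence "a = 0 \<or> a = 1" by (rule a01)
    moreover have "row_norm U i = sqrt a" unfolding row_norm_def a_def ..
    ultimately show "row_norm U i = 0 \<or> row_norm U i = 1" by auto
  qed
next
  assume nrm: "\<forall>i. row_norm U i = 0 \<or> row_norm U i = 1"
  show "\<forall>i k. i \<noteq> k \<longrightarrow> row_inner U k i = 0"
  proof (intro allI impI)
    fix i k :: nat assume ik: "i \<noteq> k"
    obtain K :: "nat set" where K: "finite K" "i \<in> K" "\<And>m. m \<notin> K \<Longrightarrow> row_inner U m i = 0"
      "row_inner U i i = of_real (\<Sum>k\<in>K. (cmod (row_inner U k i))\<^sup>2)"
      using key2[OF assms] by blast
    define a where "a = Re (row_inner U i i)"
    have ra: "row_inner U i i = of_real a" using K(4) by (simp add: a_def)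
    have aS: "a = (\<Sum>k\<in>K. (cmod (row_inner U k i))\<^sup>2)" using K(4) by (simp add: a_def)
    have a0: "a \<ge> 0" unfolding aS by (rule sum_nonneg) simp
    have "row_norm U i = sqrt a" unfolding row_norm_def a_def ..
    hence "sqrt a = 0 \<or> sqrt a = 1" using nrm by metis
    hence a01: "a = 0 \<or> a = 1" using a0 by auto
    have "a = (cmod (row_inner U i i))\<^sup>2 + (\<Sum>k\<in>K-{i}. (cmod (row_inner U k i))\<^sup>2)"
      unfolding aS by (rule sum.remove[OF K(1,2)])
    also have "(cmod (row_inner U i i))\<^sup>2 = a\<^sup>2" unfolding ra norm_of_real by simp
    also have "a\<^sup>2 = a" using a01 by auto
    finally have z: "(\<Sum>k\<in>K-{i}. (cmod (row_inner U k i))\<^sup>2) = 0" by simp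
    show "row_inner U k i = 0"
    proof (cases "k \<in> K")
      case True
      have "\<forall>x\<in>K-{i}. (cmod (row_inner U x i))\<^sup>2 = 0"
        using sum_nonneg_eq_0_iff[of "K-{i}" "\<lambda>k. (cmod (row_inner U k i))\<^sup>2"] z K(1) by simp
      with True ik have "(cmod (row_inner U k i))\<^sup>2 = 0" by simp
      thus ?thesis by simp
    next
      case False thus ?thesis by (rule K(3))
    qed
  qed
qed

end
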